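(* Let $P\subset\mathbb{R}^{n+1}$ be an $n$-dimensional lattice polytope contained in the affine hyperplane $\{x_{n+1}=1\}$, of degree $d$, let $x$ be a lattice point in the relative interior of $(n-d+1)P$, and let $S\subset P$ be an $n$-dimensional lattice simplex with vertices $v_0,\dots,v_n$ such that $x$ lies in the cone spanned by $S$. Let $Z$ be the set of vertices $v_i$ of $S$ such that $b_i(x)=0$. Then $|Z|\le d$.
   Context: Lattice points are points of $\mathbb{Z}^{n+1}$; lattice polytopes are convex hulls of finitely many lattice points. The degree $d$ of $P$ is the degree of the $h^*$-polynomial $h^*_P(t)$ defined by $\sum_{m\ge0}|mP\cap\mathbb{Z}^{n+1}|t^m=h^*_P(t)/(1-t)^{n+1}$; equivalently, $d$ is the largest nonnegative integer such that $(n-d)P$ has no lattice points in its relative interior (so $(n-d+1)P$ does have one). Since $v_0,\dots,v_n$ are linearly independent, every $y\in\mathbb{R}^{n+1}$ can be written uniquely as $y=b_0(y)v_0+\dots+b_n(y)v_n$ with real numbers $b_i(y)$. *)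

theory Defs
  imports "HOL-Analysis.Analysis"
begin

definition lattice_point :: "real ^ 'n \<Rightarrow> bool" where
  "lattice_point y \<longleftrightarrow> (\<forall>i. y $ i \<in> \<int>)"

definition lattice_polytope :: "(real ^ 'n) set \<Rightarrow> bool" where
  "lattice_polytope P \<longleftrightarrow>
     (\<exists>V. finite V \<and> (\<forall>v\<in>V. lattice_point v) \<and> P = convex hull V)"

definition dilate :: "real \<Rightarrow> (real ^ 'n) set \<Rightarrow> (real ^ 'n) set" where
  "dilate m P = (\<lambda>y. m *\<^sub>R y) ` P"

definition has_degree :: "(real ^ 'n) set \<Rightarrow> nat \<Rightarrow> nat \<Rightarrow> bool" where
  "has_degree P n d \<longleftrightarrow> d \<le> n \<and>
     (\<exists>y. lattice_point y \<and> y \<in> rel_interior (dilate (real (n - d + 1)) P)) \<and>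
     (\<forall>k::nat. 1 \<le> k \<and> k \<le> n - d \<longrightarrow>
        \<not> (\<exists>y. lattice_point y \<and> y \<in> rel_interior (dilate (real k) P)))"

end

theory Submission
  imports Defs
begin

lemma idx_hull:
  fixes v :: "nat \<Rightarrow> 'a::euclidean_space"
  assumes "finite I" "inj_on v I" "\<forall>i\<in>I. 0 \<le> a i" "sum a I = 1"
  shows "(\<Sum>i\<in>I. a i *\<^sub>R v i) \<in> convex hull (v ` I)"
proof -
  define u where "u = a \<circ> inv_into I v"
  have "sum u (v ` I) = sum a I" "(\<Sum>w\<in>v`I. u w *\<^sub>R w) = (\<Sum>i\<in>I. a i *\<^sub>R v i)"
    using assms(2) by (auto simp: sum.reindex u_def intro!: sum.cong)
  moreover have "\<forall>w\<in>v`I. 0 \<le> u w" using assms by (auto simp: u_def)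
  ultimately show ?thesis using assms
    by (subst convex_hull_finite) (auto intro!: exI[of _ u])
qed

lemma idx_relint:
  fixes v :: "nat \<Rightarrow> 'a::euclidean_space"
  assumes "finite I" "inj_on v I" "\<forall>i\<in>I. 0 < a i" "sum a I = 1" "\<not> affine_dependent (v ` I)"
  shows "(\<Sum>i\<in>I. a i *\<^sub>R v i) \<in> rel_interior (convex hull (v ` I))"
proof -
  define u where "u = a \<circ> inv_into I v"
  have "sum u (v ` I) = sum a I" "(\<Sum>w\<in>v`I. u w *\<^sub>R w) = (\<Sum>i\<in>I. a i *\<^sub>R v i)"
    using assms(2) by (auto simp: sum.reindex u_def intro!: sum.cong)
  moreover have "\<forall>w\<in>v`I. 0 < u w" using assms by (auto simp: u_def)
  ultimately show ?thesis using assms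
    by (subst rel_interior_convex_hull_explicit[OF assms(5)]) (auto intro!: exI[of _ u])
qed

lemma idx_hull_inv:
  fixes v :: "nat \<Rightarrow> 'a::euclidean_space"
  assumes "finite I" "inj_on v I" "y \<in> convex hull (v ` I)"
  shows "\<exists>a. (\<forall>i\<in>I. 0 \<le> a i) \<and> sum a I = 1 \<and> y = (\<Sum>i\<in>I. a i *\<^sub>R v i)"
proof -
  obtain u where u: "\<forall>w\<in>v`I. 0 \<le> u w" "sum u (v ` I) = 1" "(\<Sum>w\<in>v`I. u w *\<^sub>R w) = y"
    using assms(3) convex_hull_finite[of "v ` I"] assms(1) by auto
  have "sum (u \<circ> v) I = 1" "(\<Sum>i\<in>I. (u \<circ> v) i *\<^sub>R v i) = y"
    using u assms(2) by (auto simp: sum.reindex)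
  then show ?thesis using u by (intro exI[of _ "u \<circ> v"]) auto
qed

lemma idx_unique:
  fixes v :: "nat \<Rightarrow> real ^ 'n"
  assumes "finite I" "inj_on v I" "\<not> affine_dependent (v ` I)" "\<forall>i\<in>I. v i $ k = 1"
    and "(\<Sum>i\<in>I. a i *\<^sub>R v i) = (\<Sum>i\<in>I. b i *\<^sub>R v i)"
  shows "\<forall>i\<in>I. a i = b i"
proof -
  define c where "c i = a i - b i" for i
  define U where "U = c \<circ> inv_into I v"
  have s0: "(\<Sum>i\<in>I. c i *\<^sub>R v i) = 0"
    using assms(5) by (simp add: c_def scaleR_diff_left sum_subtractf)
  have "(\<Sum>i\<in>I. c i *\<^sub>R v i) $ k = (\<Sum>i\<in>I. c i)"
    using assms(4) by simp
  then have sc: "sum c I = 0" using s0 by simp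
  have "sum U (v ` I) = 0" "(\<Sum>w\<in>v`I. U w *\<^sub>R w) = 0"
    using assms(2) sc s0 by (auto simp: sum.reindex U_def intro!: sum.cong)
  then have "\<forall>w\<in>v`I. U w = 0"
    using assms(3) affine_dependent_explicit_finite[of "v ` I"] assms(1) by auto
  then show ?thesis using assms(2) by (auto simp: U_def c_def)
qed

lemma relint_dilate:
  fixes P :: "(real ^ 'n) set"
  assumes "c \<noteq> 0"
  shows "rel_interior (dilate c P) = (\<lambda>y. c *\<^sub>R y) ` rel_interior P"
  unfolding dilate_def
  by (rule rel_interior_injective_linear_image)
     (auto simp: bounded_linear_scaleR_right assms intro!: injI)

theorem lemma2p2:
  fixes P :: "(real ^ 'n) set" and n d :: nat and k :: 'n
    and x :: "real ^ 'n" and v :: "nat \<Rightarrow> real ^ 'n"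
  assumes "CARD('n) = n + 1"
    and "lattice_polytope P" and "aff_dim P = int n"
    and "\<forall>y\<in>P. y $ k = 1"
    and "has_degree P n d"
    and "lattice_point x" and "x \<in> rel_interior (dilate (real (n - d + 1)) P)"
    and "\<forall>i\<le>n. lattice_point (v i) \<and> v i \<in> P"
    and "aff_dim (convex hull (v ` {..n})) = int n"
    and "x \<in> cone hull (convex hull (v ` {..n}))"
  shows "\<forall>b. x = (\<Sum>i\<le>n. b i *\<^sub>R v i) \<longrightarrow> card {i\<in>{..n}. b i = 0} \<le> d"
proof (intro allI impI)
  fix b assume xb: "x = (\<Sum>i\<le>n. b i *\<^sub>R v i)"
  define V where "V = v ` {..n}"
  have fV: "finite V" by (simp add: V_def)
  have cV: "card V \<le> n + 1" unfolding V_def using card_image_le[of "{..n}" v] by simp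
  have "aff_dim V = int n" using assms(9) by (simp add: V_def aff_dim_convex_hull)
  then have "int n \<le> int (card V) - 1" using aff_dim_le_card[OF fV] by simp
  then have cV2: "card V = n + 1" using cV by linarith
  then have inj: "inj_on v {..n}" unfolding V_def
    by (simp add: eq_card_imp_inj_on)
  have ind: "\<not> affine_dependent V"
    using affine_independent_iff_card[of V] fV cV2 \<open>aff_dim V = int n\<close> by simp
  have vk: "\<forall>i\<in>{..n}. v i $ k = 1" using assms(4,8) by auto
  obtain c y where cy: "c \<ge> 0" "y \<in> convex hull V" "x = c *\<^sub>R y"
    using assms(10) unfolding cone_hull_expl V_def by blast
  obtain a where a: "\<forall>i\<in>{..n}. 0 \<le> a i" "sum a {..n} = 1" "y = (\<Sum>i\<le>n. a i *\<^sub>R v i)"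
    using idx_hull_inv[OF _ inj, of y] cy(2) unfolding V_def by auto
  have "x = (\<Sum>i\<le>n. (c * a i) *\<^sub>R v i)"
    using cy(3) a(3) by (simp add: scaleR_sum_right)
  then have "\<forall>i\<in>{..n}. b i = c * a i"
    using idx_unique[OF _ inj ind[unfolded V_def] vk, of b "\<lambda>i. c * a i"] xb by auto
  then have bnn: "\<forall>i\<in>{..n}. 0 \<le> b i" using a(1) cy(1) by auto
  define h where "h = real (n - d + 1)"
  have hpos: "h \<ge> 1" by (simp add: h_def)
  obtain p where p: "p \<in> rel_interior P" "x = h *\<^sub>R p"
    using assms(7) relint_dilate[of h P] hpos unfolding h_def by auto
  have pP: "p \<in> P" using p(1) rel_interior_subset by blast
  have "x $ k = h" using p(2) assms(4) pP by simp
  moreover have "x $ k = sum b {..n}" using xb vk by simp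
  ultimately have sbh: "sum b {..n} = h" by simp
  show "card {i\<in>{..n}. b i = 0} \<le> d"
  proof (rule ccontr)
    assume "\<not> ?thesis"
    then have Zc: "card {i\<in>{..n}. b i = 0} > d" by simp
    define T where "T = {i\<in>{..n}. b i \<noteq> 0}"
    have fT: "finite T" by (simp add: T_def)
    define Z where "Z = {i\<in>{..n}. b i = 0}"
    have e1: "{..n} = T \<union> Z" and e2: "T \<inter> Z = {}" by (auto simp: T_def Z_def)
    have fZ: "finite Z" by (simp add: Z_def)
    have "card (T \<union> Z) = card T + card Z" by (rule card_Un_disjoint[OF fT fZ e2])
    then have "card T + card Z = card {..n}" using e1 by simp
    then have "card T + card {i\<in>{..n}. b i = 0} = n + 1" unfolding Z_def by simp
    then have cT: "card T \<le> n - d" using Zc by linarith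
    have Tsub: "T \<subseteq> {..n}" by (auto simp: T_def)
    have injT: "inj_on v T" using inj_on_subset[OF inj Tsub] .
    have indT: "\<not> affine_dependent (v ` T)"
      using ind affine_dependent_subset[of "v ` T" V] Tsub unfolding V_def by auto
    have bpos: "\<forall>i\<in>T. 0 < b i" using bnn by (auto simp: T_def less_le)
    have xT: "x = (\<Sum>i\<in>T. b i *\<^sub>R v i)"
      unfolding xb by (rule sum.mono_neutral_right) (auto simp: T_def)
    have "sum b {..n} = sum b T"
      by (rule sum.mono_neutral_right) (auto simp: T_def)
    then have sbT: "sum b T = h" using sbh by simp
    have "(\<Sum>i\<in>T. (b i / h) *\<^sub>R v i) = (1/h) *\<^sub>R (\<Sum>i\<in>T. b i *\<^sub>R v i)"
      by (simp add: scaleR_sum_right)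
    also have "\<dots> = p" using p(2) xT hpos by simp
    finally have "p = (\<Sum>i\<in>T. (b i / h) *\<^sub>R v i)" by simp
    moreover have "sum (\<lambda>i. b i / h) T = 1" using sbT hpos by (simp add: sum_divide_distrib[symmetric])
    ultimately have pF: "p \<in> rel_interior (convex hull (v ` T))"
      using idx_relint[OF fT injT _ _ indT, of "\<lambda>i. b i / h"] bpos hpos by auto
    have FP: "convex hull (v ` T) \<subseteq> P"
    proof -
      obtain W where "P = convex hull W" using assms(2) unfolding lattice_polytope_def by blast
      then have "convex P" by simp
      moreover have "v ` T \<subseteq> P" using assms(8) Tsub by auto
      ultimately show ?thesis by (simp add: hull_minimal)
    qed
    have cvxP: "convex P"
      using assms(2) unfolding lattice_polytope_def by auto
    have relsub: "rel_interior (convex hull (v ` T)) \<subseteq> rel_interior P"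
    proof (rule subset_rel_interior_convex)
      show "convex (convex hull (v ` T))" by simp
      show "convex P" by fact
      show "convex hull (v ` T) \<le> closure P" using FP closure_subset by blast
      show "\<not> convex hull (v ` T) \<subseteq> rel_frontier P"
        using pF rel_interior_subset[of "convex hull (v ` T)"] p(1)
        unfolding rel_frontier_def by blast
    qed
    define cc where "cc i = b i - of_int \<lceil>b i\<rceil> + 1" for i
    have ccpos: "\<forall>i\<in>T. 0 < cc i \<and> cc i \<le> 1"
      unfolding cc_def by (smt (verit) ceiling_correct)
    define yy where "yy = (\<Sum>i\<in>T. cc i *\<^sub>R v i)"
    have yyx: "yy = x - (\<Sum>i\<in>T. of_int (\<lceil>b i\<rceil> - 1) *\<^sub>R v i)"
      unfolding yy_def xT cc_def
      by (simp add: sum_subtractf[symmetric] algebra_simps)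
    have latv: "\<forall>i\<in>T. \<forall>j. v i $ j \<in> \<int>"
      using assms(8) Tsub unfolding lattice_point_def by auto
    have latyy: "lattice_point yy"
      unfolding lattice_point_def
    proof
      fix j
      have "yy $ j = x $ j - (\<Sum>i\<in>T. of_int (\<lceil>b i\<rceil> - 1) * v i $ j)"
        unfolding yyx by simp
      moreover have "x $ j \<in> \<int>" using assms(6) unfolding lattice_point_def by auto
      moreover have "(\<Sum>i\<in>T. of_int (\<lceil>b i\<rceil> - 1) * v i $ j) \<in> \<int>"
        using latv by (intro Ints_sum Ints_mult) auto
      ultimately show "yy $ j \<in> \<int>" by simp
    qed
    define K where "K = sum cc T"
    have Kk: "yy $ k = K" unfolding yy_def K_def using vk Tsub by (auto intro!: sum.cong)
    have KZ: "K \<in> \<int>" using latyy Kk unfolding lattice_point_def by metis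
    have Tne: "T \<noteq> {}" using sbT hpos by auto
    have Kpos: "K > 0" unfolding K_def using ccpos fT Tne by (intro sum_pos) auto
    have Kle: "K \<le> real (card T)" unfolding K_def
      using sum_mono[of T cc "\<lambda>_. 1"] ccpos by simp
    obtain m where m: "K = real m" using KZ Kpos
      by (metis Ints_cases less_le of_int_of_nat_eq zero_le_imp_eq_int of_int_0_less_iff)
    have m1: "1 \<le> m" using m Kpos by simp
    have m2: "m \<le> n - d" using m Kle cT by linarith
    have "(\<Sum>i\<in>T. (cc i / K) *\<^sub>R v i) \<in> rel_interior (convex hull (v ` T))"
      using idx_relint[OF fT injT _ _ indT, of "\<lambda>i. cc i / K"] ccpos Kpos
      by (simp add: K_def sum_divide_distrib[symmetric])
    then have qP: "(\<Sum>i\<in>T. (cc i / K) *\<^sub>R v i) \<in> rel_interior P" using relsub by blast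
    have "yy = K *\<^sub>R (\<Sum>i\<in>T. (cc i / K) *\<^sub>R v i)"
      unfolding yy_def using Kpos by (simp add: scaleR_sum_right)
    then have "yy \<in> rel_interior (dilate (real m) P)"
      using relint_dilate[of "real m" P] qP m m1 by auto
    then show False
      using assms(5) m1 m2 latyy unfolding has_degree_def by blast
  qed
qed

end
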